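(* Let $\mathcal H$ be a real Hilbert space, $T:\mathcal H\rightrightarrows\mathcal H$ maximal monotone, and $D:\mathcal H\to\mathcal H$ monotone and continuously differentiable with Lipschitz continuous derivative $D'$. For $u\in\mathcal H$ let $D_{(u)}(x):=D(u)+D'(u)(x-u)$. Let $(s^k)$ and $(u^k)$ be bounded sequences in $\mathcal H$ and $(\rho^k)$ a bounded sequence in $(0,\infty)$. Then the sequence $x^k:=J_{\rho^k(T+D_{(u^k)})}(s^k)$, $k\ge0$, is bounded.
   Context: For a maximal monotone operator $S$, $J_S:=(S+I)^{-1}$ denotes its resolvent. *)

theory Defs
  imports "HOL-Analysis.Analysis"
begin

text \<open>Set-valued operators on a real inner product space are modelled as functions
  'a \<Rightarrow> 'a set (x \<mapsto> T(x)).\<close>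

definition monotone_op :: "('a::real_inner \<Rightarrow> 'a set) \<Rightarrow> bool" where
  "monotone_op T \<longleftrightarrow>
     (\<forall>x y v w. v \<in> T x \<longrightarrow> w \<in> T y \<longrightarrow> inner (x - y) (v - w) \<ge> 0)"

definition maximal_monotone :: "('a::real_inner \<Rightarrow> 'a set) \<Rightarrow> bool" where
  "maximal_monotone T \<longleftrightarrow>
     monotone_op T \<and> (\<forall>S. monotone_op S \<and> (\<forall>x. T x \<subseteq> S x) \<longrightarrow> S = T)"

definition op_plus :: "('a::real_vector \<Rightarrow> 'a set) \<Rightarrow> ('a \<Rightarrow> 'a) \<Rightarrow> 'a \<Rightarrow> 'a set" where
  "op_plus T F = (\<lambda>x. (\<lambda>v. v + F x) ` T x)"

definition op_scale :: "real \<Rightarrow> ('a::real_vector \<Rightarrow> 'a set) \<Rightarrow> 'a \<Rightarrow> 'a set" where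
  "op_scale \<rho> S = (\<lambda>x. (\<lambda>v. \<rho> *\<^sub>R v) ` S x)"

text \<open>Resolvent J_S = (S + I)^{-1}, as a set-valued map: x \<in> J_S(s) iff s \<in> S(x) + x.\<close>
definition resolvent :: "('a::real_vector \<Rightarrow> 'a set) \<Rightarrow> 'a \<Rightarrow> 'a set" where
  "resolvent S s = {x. s \<in> (\<lambda>v. v + x) ` S x}"

definition linearization :: "('a::real_normed_vector \<Rightarrow> 'a) \<Rightarrow> ('a \<Rightarrow> ('a \<Rightarrow>\<^sub>L 'a)) \<Rightarrow> 'a \<Rightarrow> 'a \<Rightarrow> 'a" where
  "linearization D D' u = (\<lambda>x. D u + blinfun_apply (D' u) (x - u))"

end

theory Submission
  imports Defs
begin

lemma psd:
  fixes D :: "'a::real_inner \<Rightarrow> 'a"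
  assumes mono: "monotone_op (\<lambda>y. {D y})"
    and der: "(D has_derivative blinfun_apply A) (at u)"
  shows "inner h (blinfun_apply A h) \<ge> 0"
proof (rule ccontr)
  assume neg: "\<not> ?thesis"
  define f where "f t = inner h (D (u + t *\<^sub>R h))" for t :: real
  have g: "((\<lambda>t::real. u + t *\<^sub>R h) has_derivative (\<lambda>t. t *\<^sub>R h)) (at 0)"
    by (auto intro!: derivative_eq_intros)
  have dc: "((\<lambda>t::real. D (u + t *\<^sub>R h)) has_derivative (\<lambda>t. blinfun_apply A (t *\<^sub>R h))) (at 0)"
    using has_derivative_compose[OF g] der by (simp add: o_def)
  have "(f has_derivative (\<lambda>t. inner h (blinfun_apply A (t *\<^sub>R h)))) (at 0)"
    unfolding f_def using has_derivative_inner_right[OF dc] by simp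
  moreover have "(\<lambda>t. inner h (blinfun_apply A (t *\<^sub>R h))) = (\<lambda>t. inner h (blinfun_apply A h) * t)"
    by (auto simp: blinfun.scaleR_right)
  ultimately have "DERIV f 0 :> inner h (blinfun_apply A h)"
    by (simp add: has_field_derivative_def)
  from DERIV_neg_dec_right[OF this] neg obtain d where d: "d > 0" "\<forall>t>0. t < d \<longrightarrow> f 0 > f (0 + t)"
    by force
  define t where "t = d/2"
  have t: "t > 0" "t < d" using d by (auto simp: t_def)
  have "inner ((u + t *\<^sub>R h) - u) (D (u + t *\<^sub>R h) - D u) \<ge> 0"
    using mono unfolding monotone_op_def by blast
  hence "t * (f t - f 0) \<ge> 0" by (simp add: f_def inner_diff_right right_diff_distrib)
  hence "f t \<ge> f 0" using t by (simp add: zero_le_mult_iff)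
  with d t show False by auto
qed

theorem lemma2p4:
  fixes T :: "'a::{real_inner,complete_space} \<Rightarrow> 'a set"
    and D :: "'a \<Rightarrow> 'a"
    and D' :: "'a \<Rightarrow> ('a \<Rightarrow>\<^sub>L 'a)"
    and s u x :: "nat \<Rightarrow> 'a"
    and \<rho> :: "nat \<Rightarrow> real"
  assumes "maximal_monotone T"
    and "monotone_op (\<lambda>y. {D y})"
    and "\<And>y. (D has_derivative blinfun_apply (D' y)) (at y)"
    and "continuous_on UNIV D'"
    and "\<exists>L. L-lipschitz_on UNIV D'"
    and "bounded (range s)"
    and "bounded (range u)"
    and "\<And>k. \<rho> k > 0"
    and "bounded (range \<rho>)"
    and "\<And>k. x k \<in> resolvent (op_scale (\<rho> k) (op_plus T (linearization D D' (u k)))) (s k)"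
  shows "bounded (range x)"
proof -
  note mT = assms(1) and mD = assms(2) and der = assms(3)
  obtain L where L: "L-lipschitz_on UNIV D'" using assms(5) by blast
  have L0: "L \<ge> 0" using lipschitz_on_nonneg[OF L] .
  obtain Bs where Bs: "\<And>k. norm (s k) \<le> Bs" using assms(6) by (auto simp: bounded_iff)
  obtain Bu where Bu: "\<And>k. norm (u k) \<le> Bu" using assms(7) by (auto simp: bounded_iff)
  obtain Br where Br: "\<And>k. norm (\<rho> k) \<le> Br" using assms(9) by (auto simp: bounded_iff)
  have Bu0: "Bu \<ge> 0" using Bu[of 0] norm_ge_zero order_trans by blast
  define BA where "BA = norm (D' 0) + L * Bu"
  have BA: "norm (D' y) \<le> BA" if "norm y \<le> Bu" for y
  proof -
    have "dist (D' y) (D' 0) \<le> L * dist y 0" using lipschitz_onD[OF L] by blast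
    hence "norm (D' y - D' 0) \<le> L * Bu" using that L0
      by (metis dist_norm diff_zero mult_left_mono order_trans)
    thus ?thesis unfolding BA_def using norm_triangle_ineq2[of "D' y" "D' 0"] by linarith
  qed
  define BD where "BD = norm (D 0) + BA * Bu"
  have BD: "norm (D y) \<le> BD" if "norm y \<le> Bu" for y
  proof -
    have "norm (D y - D 0) \<le> BA * norm (y - 0)"
    proof (rule differentiable_bound[of "cball 0 Bu" D "\<lambda>z. blinfun_apply (D' z)"])
      show "convex (cball (0::'a) Bu)" by simp
      show "(D has_derivative blinfun_apply (D' z)) (at z within cball 0 Bu)" for z
        using der has_derivative_at_withinI by blast
      show "onorm (blinfun_apply (D' z)) \<le> BA" if "z \<in> cball 0 Bu" for z
        using BA[of z] that by (simp add: norm_blinfun.rep_eq[symmetric])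
    qed (use that Bu0 in auto)
    hence "norm (D y - D 0) \<le> BA * Bu"
      using that BA[of 0] Bu0 by (metis diff_zero norm_ge_zero order_trans mult_left_mono norm_zero)
    thus ?thesis unfolding BD_def using norm_triangle_ineq2[of "D y" "D 0"] by linarith
  qed
  obtain x0 t0 where t0: "t0 \<in> T x0"
  proof -
    have "\<exists>x0. T x0 \<noteq> {}"
    proof (rule ccontr)
      assume "\<not> ?thesis"
      hence e: "\<And>z. T z = {}" by auto
      have "monotone_op (\<lambda>z::'a. {0::'a})" by (simp add: monotone_op_def)
      hence "(\<lambda>z::'a. {0::'a}) = T" using mT e unfolding maximal_monotone_def by blast
      thus False using e by (metis empty_not_insert)
    qed
    thus ?thesis using that by blast
  qed
  have "\<forall>k. \<exists>t. t \<in> T (x k) \<and> s k = \<rho> k *\<^sub>R (t + linearization D D' (u k) (x k)) + x k"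
    using assms(10) by (force simp: resolvent_def op_scale_def op_plus_def)
  then obtain t where t: "\<And>k. t k \<in> T (x k)"
    and st: "\<And>k. s k = \<rho> k *\<^sub>R (t k + D (u k) + blinfun_apply (D' (u k)) (x k - u k)) + x k"
    unfolding linearization_def by (metis add.assoc)
  define W where "W = Bs + norm x0 + Br * (norm t0 + BD + BA * (norm x0 + Bu))"
  have "norm (x k - x0) \<le> W" for k
  proof -
    define y where "y = x k - x0"
    define A where "A = D' (u k)"
    define c where "c = t0 + D (u k) + blinfun_apply A (x0 - u k)"
    define w where "w = s k - x0 - \<rho> k *\<^sub>R c"
    have m: "inner (x k - x0) (t k - t0) \<ge> 0" using mT t[of k] t0
      unfolding maximal_monotone_def monotone_op_def by blast
    have Al: "blinfun_apply A (x k - u k) = blinfun_apply A y + blinfun_apply A (x0 - u k)"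
      unfolding y_def by (metis blinfun.add_right diff_add_cancel add_diff_eq)
    have rt: "\<rho> k *\<^sub>R t k = s k - x k - \<rho> k *\<^sub>R (D (u k) + blinfun_apply A (x k - u k))"
      using st[of k] unfolding A_def by (simp add: algebra_simps)
    have "0 \<le> \<rho> k * inner y (t k - t0)" using m assms(8)[of k] unfolding y_def by simp
    also have "\<dots> = inner y (\<rho> k *\<^sub>R t k - \<rho> k *\<^sub>R t0)"
      by (simp add: inner_diff_right scaleR_diff_right[symmetric])
    also have "\<dots> = inner y (w - y) - \<rho> k * inner y (blinfun_apply A y)"
      unfolding rt Al w_def c_def y_def by (simp add: algebra_simps inner_diff_right inner_add_right)
    finally have "inner y y \<le> inner y w - \<rho> k * inner y (blinfun_apply A y)"
      by (simp add: inner_diff_right)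
    moreover have "\<rho> k * inner y (blinfun_apply A y) \<ge> 0"
      using psd[OF mD der[of "u k"]] assms(8)[of k] unfolding A_def by simp
    ultimately have "norm y ^ 2 \<le> norm y * norm w"
      using Cauchy_Schwarz_ineq2[of y w] by (simp add: power2_norm_eq_inner)
    hence ny: "norm y \<le> norm w"
      by (cases "norm y = 0") (auto simp: power2_eq_square)
    have nA: "norm A \<le> BA" using BA Bu unfolding A_def by blast
    have "norm c \<le> norm t0 + BD + BA * (norm x0 + Bu)"
    proof -
      have "norm (blinfun_apply A (x0 - u k)) \<le> norm A * norm (x0 - u k)" by (rule norm_blinfun)
      also have "\<dots> \<le> BA * (norm x0 + Bu)"
        using nA Bu[of k] norm_triangle_ineq4[of x0 "u k"]
        by (intro mult_mono) (auto intro: order_trans[OF norm_ge_zero])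
      finally show ?thesis unfolding c_def using BD[OF Bu[of k]]
        norm_triangle_ineq[of "t0 + D (u k)" "blinfun_apply A (x0 - u k)"]
        norm_triangle_ineq[of t0 "D (u k)"] by linarith
    qed
    hence "norm (\<rho> k *\<^sub>R c) \<le> Br * (norm t0 + BD + BA * (norm x0 + Bu))"
      using Br[of k] by (auto intro!: mult_mono)
    hence "norm w \<le> W" unfolding w_def W_def using Bs[of k]
      norm_triangle_ineq4[of "s k - x0" "\<rho> k *\<^sub>R c"] norm_triangle_ineq4[of "s k" x0] by linarith
    with ny show ?thesis unfolding y_def by simp
  qed
  hence "\<And>k. norm (x k) \<le> W + norm x0"
    using norm_triangle_ineq2 by (metis add.commute diff_le_eq order_trans)
  thus ?thesis by (auto simp: bounded_iff)
qed

end
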